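(* Let two independent walkers start at the origin and each take $n\ge1$ steps, each step being $(1,0)$ or $(0,1)$ with probability $1/2$ independently. The probability that their vertex sets have no point in common other than the origin is $\binom{2n}{n}/4^n$.
   Context: The vertex set of a walk $v_0=(0,0),v_1,\dots,v_n$ is $\{v_0,\dots,v_n\}$. *)

theory Defs
  imports "HOL-Probability.Probability"
begin

definition step_vec :: "bool \<Rightarrow> int \<times> int" where
  "step_vec b = (if b then (1, 0) else (0, 1))"

definition walk_vertex :: "bool list \<Rightarrow> nat \<Rightarrow> int \<times> int" where
  "walk_vertex s k = (\<Sum>b\<leftarrow>take k s. step_vec b)"

definition vertex_set :: "bool list \<Rightarrow> (int \<times> int) set" where
  "vertex_set s = {walk_vertex s k | k. k \<le> length s}"

text \<open>All walks with n steps; uniform choice = independent fair steps.\<close>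
definition walks :: "nat \<Rightarrow> bool list set" where
  "walks n = {s. length s = n}"

end

theory Submission
  imports Defs
begin

fun dl :: "bool \<Rightarrow> int" where
  "dl b = (if b then 1 else 0)"

fun ok :: "int \<Rightarrow> bool list \<Rightarrow> bool list \<Rightarrow> bool" where
  "ok d (a#s) (b#t) = (d + dl a - dl b \<noteq> 0 \<and> ok (d + dl a - dl b) s t)"
| "ok d _ _ = True"

definition cnt :: "nat \<Rightarrow> int \<Rightarrow> int" where
  "cnt m d = (\<Sum>s\<in>walks m. \<Sum>t\<in>walks m. if ok d s t then 1 else 0)"

lemma finite_walks[simp]: "finite (walks n)"
proof -
  have "walks n = {xs. set xs \<subseteq> (UNIV::bool set) \<and> length xs = n}" by (auto simp: walks_def)
  thus ?thesis using finite_lists_length_eq[of "UNIV::bool set" n] by simp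
qed

lemma card_walks: "card (walks n) = 2 ^ n"
proof -
  have "walks n = {xs. set xs \<subseteq> (UNIV::bool set) \<and> length xs = n}" by (auto simp: walks_def)
  thus ?thesis using card_lists_length_eq[of "UNIV::bool set" n] by simp
qed

lemma walks_Suc: "walks (Suc m) = Cons True ` walks m \<union> Cons False ` walks m"
proof -
  have "\<And>x. length x = Suc m \<Longrightarrow> x \<in> Cons True ` {s. length s = m} \<union> Cons False ` {s. length s = m}"
  proof -
    fix x :: "bool list" assume "length x = Suc m"
    then obtain a s where "x = a # s" "length s = m" by (cases x) auto
    thus "x \<in> Cons True ` {s. length s = m} \<union> Cons False ` {s. length s = m}"
      by (cases a) auto
  qed
  thus ?thesis by (auto simp: walks_def)
qed

lemma sum_walks_Suc:
  "(\<Sum>s\<in>walks (Suc m). f s) = (\<Sum>s\<in>walks m. f (True # s)) + (\<Sum>s\<in>walks m. f (False # s))"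
  unfolding walks_Suc
  by (subst sum.union_disjoint) (auto simp: sum.reindex)

lemma ok_swap: "length s = length t \<Longrightarrow> ok (-d) t s = ok d s t"
proof (induction s t arbitrary: d rule: list_induct2)
  case Nil then show ?case by simp
next
  case (Cons a s b t)
  have "-d + dl b - dl a = -(d + dl a - dl b)" by simp
  then show ?case using Cons.IH[of "d + dl a - dl b"] by (simp only: ok.simps) auto
qed

lemma cnt_neg: "cnt m (-d) = cnt m d"
proof -
  have "cnt m (-d) = (\<Sum>s\<in>walks m. \<Sum>t\<in>walks m. if ok (-d) t s then 1 else 0)"
    unfolding cnt_def by (rule sum.swap)
  also have "\<dots> = cnt m d" unfolding cnt_def
    by (intro sum.cong refl) (simp add: ok_swap walks_def)
  finally show ?thesis .
qed

lemma cnt_0: "cnt 0 d = 1"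
  by (simp add: cnt_def walks_def)

lemma aux_if: "(\<Sum>s\<in>A. \<Sum>t\<in>B. if c \<and> P s t then 1 else (0::int)) =
  (if c then (\<Sum>s\<in>A. \<Sum>t\<in>B. if P s t then 1 else 0) else 0)"
  by (cases c) simp_all

lemma cnt_Suc: "cnt (Suc m) d =
   (if d + 1 \<noteq> 0 then cnt m (d+1) else 0) + 2 * (if d \<noteq> 0 then cnt m d else 0)
   + (if d - 1 \<noteq> 0 then cnt m (d - 1) else 0)" (is "_ = ?rhs")
proof -
  have "cnt (Suc m) d = (\<Sum>s\<in>walks m. \<Sum>t\<in>walks m. if ok d (True#s) (True#t) then 1 else 0)
    + (\<Sum>s\<in>walks m. \<Sum>t\<in>walks m. if ok d (True#s) (False#t) then 1 else 0)
    + ((\<Sum>s\<in>walks m. \<Sum>t\<in>walks m. if ok d (False#s) (True#t) then 1 else 0)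
    + (\<Sum>s\<in>walks m. \<Sum>t\<in>walks m. if ok d (False#s) (False#t) then 1 else 0))"
    unfolding cnt_def sum_walks_Suc by (simp only: sum.distrib)
  also have "\<dots> = ?rhs"
    by (simp only: ok.simps dl.simps if_True if_False aux_if cnt_def) (cases "d = -1"; simp)
  finally show ?thesis .
qed
    
definition H :: "nat \<Rightarrow> nat \<Rightarrow> int" where
  "H m j = (\<Sum>k<j. int (2*m choose k))"

definition F :: "nat \<Rightarrow> nat \<Rightarrow> int" where
  "F m d = H m (m + d) - H m (m - d)"

lemma choose2: "int (Suc (Suc n) choose Suc (Suc k)) =
   int (n choose Suc (Suc k)) + 2 * int (n choose Suc k) + int (n choose k)"
  by (simp add: binomial_Suc_Suc)

lemma H_Suc: "H (Suc m) j = H m j + 2 * H m (j - 1) + H m (j - 2)"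
proof (induction j)
  case 0 then show ?case by (simp add: H_def)
next
  case (Suc j)
  have e: "2 * Suc m = Suc (Suc (2*m))" by simp
  have "H (Suc m) (Suc j) = H (Suc m) j + int (2 * Suc m choose j)" by (simp add: H_def)
  show ?case
  proof (cases j)
    case 0 then show ?thesis by (simp add: H_def)
  next
    case (Suc i)
    show ?thesis
    proof (cases i)
      case 0 then show ?thesis using Suc by (simp add: H_def numeral_2_eq_2)
    next
      case (Suc k)
      have "H (Suc m) (Suc j) = H (Suc m) j + int (2 * Suc m choose j)" by (simp add: H_def)
      also have "int (2 * Suc m choose j) = int (2*m choose j) + 2 * int (2*m choose (j-1)) + int (2*m choose (j-2))"
        unfolding e using \<open>j = Suc i\<close> Suc choose2 by simp
      finally show ?thesis using Suc.IH \<open>j = Suc i\<close> Suc by (simp add: H_def)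
    qed
  qed
qed

lemma F_Suc: "d \<ge> 1 \<Longrightarrow> F (Suc m) d = F m (d+1) + 2 * F m d + F m (d - 1)"
proof -
  assume d: "d \<ge> 1"
  have a: "Suc m + d - 1 = m + d" "Suc m + d - 2 = m + d - 1" "Suc m - d - 1 = m - d"
    "Suc m - d - 2 = m - (d+1)" "m - (d - 1) = Suc m - d" "m + (d - 1) = m + d - 1" using d by auto
  show ?thesis unfolding F_def H_Suc a by (simp add: algebra_simps)
qed

lemma sum0: "d \<ge> 1 \<Longrightarrow> (\<Sum>k<d. int (0 choose k)) = 1"
proof (induction d)
  case (Suc d) then show ?case by (cases d) auto
qed simp

lemma cnt_F: "d \<ge> 1 \<Longrightarrow> cnt m (int d) = F m d"
proof (induction m arbitrary: d)
  case 0
  have "(\<Sum>k<d. int (0 choose k)) = 1" by (rule sum0) (use 0 in simp)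
  then show ?case by (simp add: cnt_0 F_def H_def)
next
  case (Suc m)
  have "cnt (Suc m) (int d) = cnt m (int (d+1)) + 2 * cnt m (int d)
     + (if d = 1 then 0 else cnt m (int (d - 1)))"
    unfolding cnt_Suc using Suc.prems by (auto simp: of_nat_diff add.commute)
  also have "\<dots> = F m (d+1) + 2 * F m d + F m (d - 1)"
  proof -
    have 1: "cnt m (int (d+1)) = F m (d+1)" by (rule Suc.IH) simp
    have 4: "cnt m (int d) = F m d" by (rule Suc.IH) (rule Suc.prems)
    have 2: "d \<noteq> 1 \<Longrightarrow> cnt m (int (d-1)) = F m (d-1)" by (rule Suc.IH) (use Suc.prems in simp)
    have 3: "F m 0 = 0" by (simp add: F_def)
    show ?thesis using 1 2 3 4 by (cases "d = 1") simp_all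
  qed
  finally show ?case using F_Suc Suc.prems by simp
qed

lemma cnt_main: "cnt (Suc m) 0 = int (2 * Suc m choose Suc m)"
proof -
  have "cnt (Suc m) 0 = 2 * cnt m 1" using cnt_Suc[of m 0] cnt_neg[of m 1] by simp
  also have "\<dots> = 2 * F m 1" using cnt_F[of 1 m] by simp
  also have "F m 1 = int (2*m+1 choose m)"
  proof (cases m)
    case 0 then show ?thesis by (simp add: F_def H_def)
  next
    case (Suc k)
    have "F m 1 = int (2*m choose m) + int (2*m choose k)"
      unfolding F_def H_def using Suc by simp
    also have "\<dots> = int (2*m+1 choose m)" using Suc by (simp add: binomial_Suc_Suc)
    finally show ?thesis .
  qed
  also have "2 * int (2*m+1 choose m) = int (2 * Suc m choose Suc m)"
  proof -
    have "(2*m+1 choose Suc m) = (2*m+1 choose m)"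
      using binomial_symmetric[of "Suc m" "2*m+1"] by simp
    then show ?thesis by (simp add: binomial_Suc_Suc)
  qed
  finally show ?thesis .
qed


lemma wv_0[simp]: "walk_vertex s 0 = (0,0)"
  by (simp add: walk_vertex_def zero_prod_def)

lemma wv_Suc[simp]: "walk_vertex (a#s) (Suc k) = step_vec a + walk_vertex s k"
  by (simp add: walk_vertex_def)

lemma wv_Nil[simp]: "walk_vertex [] k = (0,0)"
  by (simp add: walk_vertex_def zero_prod_def)

lemma fst_step[simp]: "fst (step_vec a) = dl a"
  by (simp add: step_vec_def)

lemma wv_sum: "fst (walk_vertex s k) + snd (walk_vertex s k) = int (min k (length s))"
proof (induction s arbitrary: k)
  case Nil then show ?case by simp
next
  case (Cons a s)
  then show ?case by (cases k) (auto simp: step_vec_def)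
qed

lemma ok_iff: "length s = length t \<Longrightarrow> ok d s t \<longleftrightarrow>
  (\<forall>k. 1 \<le> k \<and> k \<le> length s \<longrightarrow> d + fst (walk_vertex s k) - fst (walk_vertex t k) \<noteq> 0)"
proof (induction s t arbitrary: d rule: list_induct2)
  case Nil then show ?case by simp
next
  case (Cons a s b t)
  let ?d = "d + dl a - dl b"
  have e: "\<And>j. d + fst (walk_vertex (a#s) (Suc j)) - fst (walk_vertex (b#t) (Suc j))
     = ?d + fst (walk_vertex s j) - fst (walk_vertex t j)" by simp
  show ?case
  proof
    assume "ok d (a#s) (b#t)"
    then have h: "?d \<noteq> 0" "ok ?d s t" by auto
    show "\<forall>k. 1 \<le> k \<and> k \<le> length (a#s) \<longrightarrow> d + fst (walk_vertex (a#s) k) - fst (walk_vertex (b#t) k) \<noteq> 0"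
    proof (intro allI impI)
      fix k assume k: "1 \<le> k \<and> k \<le> length (a#s)"
      then obtain j where j: "k = Suc j" by (cases k) auto
      show "d + fst (walk_vertex (a#s) k) - fst (walk_vertex (b#t) k) \<noteq> 0"
      proof (cases j)
        case 0 then show ?thesis using h j by simp
      next
        case (Suc i)
        then show ?thesis unfolding j e using h Cons.IH[of ?d] k j by simp
      qed
    qed
  next
    assume h: "\<forall>k. 1 \<le> k \<and> k \<le> length (a#s) \<longrightarrow> d + fst (walk_vertex (a#s) k) - fst (walk_vertex (b#t) k) \<noteq> 0"
    have "?d \<noteq> 0" using h[rule_format, of 1] by simp
    moreover have "ok ?d s t"
      unfolding Cons.IH
    proof (intro allI impI)
      fix k assume k: "1 \<le> k \<and> k \<le> length s"
      show "?d + fst (walk_vertex s k) - fst (walk_vertex t k) \<noteq> 0"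
        using h[rule_format, of "Suc k"] k unfolding e by simp
    qed
    ultimately show "ok d (a#s) (b#t)" by simp
  qed
qed

lemma good_iff:
  assumes "length s = n" "length t = n"
  shows "(vertex_set s \<inter> vertex_set t = {(0,0)}) \<longleftrightarrow> ok 0 s t"
proof -
  have ok: "ok 0 s t \<longleftrightarrow> (\<forall>k. 1 \<le> k \<and> k \<le> n \<longrightarrow> walk_vertex s k \<noteq> walk_vertex t k)"
  proof -
    have "\<And>k. k \<le> n \<Longrightarrow> (walk_vertex s k = walk_vertex t k) \<longleftrightarrow> fst (walk_vertex s k) = fst (walk_vertex t k)"
    proof -
      fix k assume "k \<le> n"
      have "fst (walk_vertex s k) + snd (walk_vertex s k) = fst (walk_vertex t k) + snd (walk_vertex t k)"
        using wv_sum[of s k] wv_sum[of t k] assms by simp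
      then show "(walk_vertex s k = walk_vertex t k) \<longleftrightarrow> fst (walk_vertex s k) = fst (walk_vertex t k)"
        by (metis add_left_cancel prod.expand add.commute)
    qed
    then show ?thesis using ok_iff[of s t 0] assms by auto
  qed
  show ?thesis
  proof
    assume h: "vertex_set s \<inter> vertex_set t = {(0,0)}"
    show "ok 0 s t" unfolding ok
    proof (intro allI impI notI)
      fix k assume k: "1 \<le> k \<and> k \<le> n" and eq: "walk_vertex s k = walk_vertex t k"
      have "walk_vertex s k \<in> vertex_set s \<inter> vertex_set t"
        using k eq assms unfolding vertex_set_def by (auto intro!: exI[of _ k])
      then have "walk_vertex s k = (0,0)" using h by auto
      then show False using wv_sum[of s k] k assms by simp
    qed
  next
    assume "ok 0 s t"
    then have h: "\<And>k. 1 \<le> k \<Longrightarrow> k \<le> n \<Longrightarrow> walk_vertex s k \<noteq> walk_vertex t k" unfolding ok by blast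
    show "vertex_set s \<inter> vertex_set t = {(0,0)}"
    proof
      show "{(0,0)} \<subseteq> vertex_set s \<inter> vertex_set t"
        unfolding vertex_set_def by (auto intro!: exI[of _ 0])
    next
      show "vertex_set s \<inter> vertex_set t \<subseteq> {(0,0)}"
      proof
        fix p assume "p \<in> vertex_set s \<inter> vertex_set t"
        then have ps: "p \<in> vertex_set s" and pt: "p \<in> vertex_set t" by auto
        obtain j where j: "p = walk_vertex s j" "j \<le> n"
          using ps assms(1) unfolding vertex_set_def by blast
        obtain k where k: "p = walk_vertex t k" "k \<le> n"
          using pt assms(2) unfolding vertex_set_def by blast
        note jk = j k
        have "int j = int k" using wv_sum[of s j] wv_sum[of t k] jk(1,2,4) assms unfolding jk(3) by simp
        then have "j = k" by simp
        show "p \<in> {(0,0)}"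
        proof (cases "k = 0")
          case True then show ?thesis using jk(3) by simp
        next
          case False
          then have "walk_vertex s k \<noteq> walk_vertex t k" using h[of k] jk(4) by simp
          then show ?thesis using jk(1,3) \<open>j = k\<close> by simp
        qed
      qed
    qed
  qed
qed

theorem corollary2:
  fixes n :: nat
  assumes "n \<ge> 1"
  shows "measure_pmf.prob (pmf_of_set (walks n \<times> walks n))
           {(s, t). vertex_set s \<inter> vertex_set t = {(0, 0)}}
         = real (2 * n choose n) / 4 ^ n"
proof -
  let ?W = "walks n \<times> walks n"
  have r: "replicate n True \<in> walks n" by (simp add: walks_def)
  then have ne: "?W \<noteq> {}" by blast
  have fin: "finite ?W" by simp
  have cW: "card ?W = 4 ^ n" 
  proof -
    have "card ?W = 2^n * 2^n" by (simp only: card_walks card_cartesian_product)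
    also have "\<dots> = (2*2::nat)^n" by (rule power_mult_distrib[symmetric])
    finally show ?thesis by simp
  qed
  have g: "(vertex_set s \<inter> vertex_set t = {(0,0)}) = ok 0 s t" if st: "(s,t) \<in> ?W" for s t
  proof -
    have "length s = n" "length t = n" using st by (auto simp: walks_def)
    then show ?thesis by (rule good_iff)
  qed
  have set: "?W \<inter> {(s, t). vertex_set s \<inter> vertex_set t = {(0, 0)}} = {x \<in> ?W. case x of (s,t) \<Rightarrow> ok 0 s t}"
  proof (rule set_eqI)
    fix x show "x \<in> ?W \<inter> {(s, t). vertex_set s \<inter> vertex_set t = {(0, 0)}} \<longleftrightarrow> x \<in> {x \<in> ?W. case x of (s,t) \<Rightarrow> ok 0 s t}"
      using g[of "fst x" "snd x"] by (cases x) auto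
  qed
  have "int (card {x \<in> ?W. case x of (s,t) \<Rightarrow> ok 0 s t}) = (\<Sum>x\<in>{x \<in> ?W. case x of (s,t) \<Rightarrow> ok 0 s t}. 1)"
    by (simp only: card_eq_sum of_nat_sum of_nat_1)
  also have "\<dots> = (\<Sum>x\<in>?W. if (case x of (s,t) \<Rightarrow> ok 0 s t) then 1 else 0)"
    using fin by (rule sum.inter_filter)
  also have "\<dots> = cnt n 0" unfolding cnt_def sum.cartesian_product
    by (intro sum.cong refl) (simp split: prod.splits)
  also have "\<dots> = int (2 * n choose n)"
    proof -
    have "n = Suc (n - 1)" using assms by simp
    then show ?thesis using cnt_main[of "n - 1"] by metis
  qed
  finally have c: "card {x \<in> ?W. case x of (s,t) \<Rightarrow> ok 0 s t} = 2 * n choose n" by linarith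
  have "measure_pmf.prob (pmf_of_set ?W) {(s, t). vertex_set s \<inter> vertex_set t = {(0, 0)}}
     = real (card (?W \<inter> {(s, t). vertex_set s \<inter> vertex_set t = {(0, 0)}})) / real (card ?W)"
    by (rule measure_pmf_of_set[OF ne fin])
  also have "\<dots> = real (2 * n choose n) / 4 ^ n" unfolding set c cW by simp
  finally show ?thesis .
qed

end
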